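(* Let $L$ be the signed Laplacian of a signed digraph and let $L_s=(L+L^\top)/2$. If $L_s$ is positive semidefinite of corank $1$, then $L$ is weight balanced (i.e. $L^\top\mathbf{1}=0$) and $-L$ is marginally stable of corank $1$.
   Context: A signed digraph has real weighted adjacency matrix $A\in\mathbb{R}^{n\times n}$ (entries of any sign). Its signed Laplacian is $L=\Sigma-A$ with $\Sigma=\mathrm{diag}(\sigma_1,\dots,\sigma_n)$, $\sigma_i=\sum_jA_{ij}$, so $L\mathbf{1}=0$. Weight balanced means $A\mathbf{1}=A^\top\mathbf{1}$, equivalently $L^\top\mathbf{1}=0$. $M$ is marginally stable if all eigenvalues have real part $\le 0$ and each eigenvalue with zero real part is a simple root of the minimal polynomial. Corank means dimension of the kernel. *)

theory Defs
  imports "Jordan_Normal_Form.Char_Poly" "Jordan_Normal_Form.Matrix_Kernel"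
begin

definition ones_vec :: "nat \<Rightarrow> 'a :: one vec" where
  "ones_vec n = vec n (\<lambda>_. 1)"

definition signed_laplacian :: "real mat \<Rightarrow> real mat" where
  "signed_laplacian A = mat (dim_row A) (dim_col A)
     (\<lambda>(i,j). (if i = j then (\<Sum>k<dim_col A. A $$ (i,k)) else 0) - A $$ (i,j))"

definition psd :: "real mat \<Rightarrow> bool" where
  "psd M \<longleftrightarrow> (\<forall>x \<in> carrier_vec (dim_col M). x \<bullet> (M *\<^sub>v x) \<ge> 0)"

definition corank :: "'a :: field mat \<Rightarrow> nat" where
  "corank M = kernel_dim M"

definition poly_mat :: "'a :: comm_ring_1 poly \<Rightarrow> 'a mat \<Rightarrow> 'a mat" where
  "poly_mat p M = foldr (\<lambda>c B. c \<cdot>\<^sub>m 1\<^sub>m (dim_row M) + M * B) (coeffs p)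
                        (0\<^sub>m (dim_row M) (dim_row M))"

definition minimal_poly :: "'a :: field mat \<Rightarrow> 'a poly" where
  "minimal_poly M = (THE p. monic p \<and> poly_mat p M = 0\<^sub>m (dim_row M) (dim_row M) \<and>
      (\<forall>q. q \<noteq> 0 \<longrightarrow> poly_mat q M = 0\<^sub>m (dim_row M) (dim_row M) \<longrightarrow> degree p \<le> degree q))"

definition marginally_stable :: "real mat \<Rightarrow> bool" where
  "marginally_stable M \<longleftrightarrow>
     (let Mc = map_mat complex_of_real M in
      (\<forall>z. eigenvalue Mc z \<longrightarrow> Re z \<le> 0) \<and>
      (\<forall>z. eigenvalue Mc z \<and> Re z = 0 \<longrightarrow> Polynomial.order z (minimal_poly Mc) = 1))"

end

theory Submission
  imports Defs
begin



lemma smult_one_mult_mat[simp]: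
  assumes "B \<in> carrier_mat n k"
  shows "(c \<cdot>\<^sub>m 1\<^sub>m n) * B = c \<cdot>\<^sub>m (B :: 'a :: comm_ring_1 mat)"
  using mult_smult_assoc_mat[of "1\<^sub>m n" n n B k c] assms by simp

lemma mult_smult_one_mat[simp]:
  assumes "B \<in> carrier_mat k n"
  shows "B * (c \<cdot>\<^sub>m 1\<^sub>m n) = c \<cdot>\<^sub>m (B :: 'a :: comm_ring_1 mat)"
  using mult_smult_distrib[of B k n "1\<^sub>m n" n c] assms by simp

lemma smult_one_mult_vec[simp]:
  assumes "v \<in> carrier_vec n"
  shows "(c \<cdot>\<^sub>m 1\<^sub>m n) *\<^sub>v v = c \<cdot>\<^sub>v (v :: 'a :: comm_ring_1 vec)"
proof (rule eq_vecI)
  fix i assume i: "i < dim_vec (c \<cdot>\<^sub>v v)"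
  have "\<And>ia. (if i = ia then c else 0) * v $ ia = (if i = ia then c * v $ ia else 0)" by simp
  moreover have "\<And>ia. c * (if i = ia then 1 else 0) * v $ ia = (if i = ia then c * v $ ia else 0)" by simp
  ultimately show "((c \<cdot>\<^sub>m 1\<^sub>m n) *\<^sub>v v) $ i = (c \<cdot>\<^sub>v v) $ i"
    using i assms by (auto simp: scalar_prod_def row_def sum.delta)
qed (use assms in auto)

lemma mult_mat_vec_smult:
  assumes "(A::'a::comm_ring_1 mat) \<in> carrier_mat nr nc" and "v \<in> carrier_vec nc"
  shows "A *\<^sub>v (k \<cdot>\<^sub>v v) = k \<cdot>\<^sub>v (A *\<^sub>v v)"
  by (rule eq_vecI) (use assms in auto)

lemma zero_smult_mat'[simp]: "(0::'a::comm_ring_1) \<cdot>\<^sub>m A = 0\<^sub>m (dim_row A) (dim_col A)"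
  by (rule eq_matI) auto

lemma poly_mat_carrier_aux:
  assumes M: "M \<in> carrier_mat n n"
  shows "foldr (\<lambda>c B. c \<cdot>\<^sub>m 1\<^sub>m n + M * B) xs (0\<^sub>m n n) \<in> carrier_mat n n"
  by (induct xs) (use M in auto)

lemma poly_mat_carrier[simp]:
  assumes M: "M \<in> carrier_mat n n"
  shows "poly_mat p M \<in> carrier_mat n n"
  unfolding poly_mat_def using poly_mat_carrier_aux[OF M] M by auto

lemma poly_mat_0[simp]: "poly_mat 0 M = 0\<^sub>m (dim_row M) (dim_row M)"
  unfolding poly_mat_def by simp

lemma poly_mat_pCons:
  assumes M: "M \<in> carrier_mat n n"
  shows "poly_mat (pCons a p) M = a \<cdot>\<^sub>m 1\<^sub>m n + M * poly_mat p M"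
proof (cases "p = 0 \<and> a = 0")
  case True
  then show ?thesis using M by (auto simp: poly_mat_def)
next
  case False
  then show ?thesis using M unfolding poly_mat_def
    by (auto simp: cCons_def)
qed

lemma poly_mat_add:
  assumes M: "M \<in> carrier_mat n n"
  shows "poly_mat (p + q) M = poly_mat p M + poly_mat q M"
proof (induct p arbitrary: q rule: pCons_induct)
  case 0
  then show ?case using M by simp
next
  case (pCons a p)
  obtain b q' where q: "q = pCons b q'" by (cases q) auto
  have "poly_mat (pCons a p + q) M = poly_mat (pCons (a+b) (p + q')) M" using q by simp
  also have "\<dots> = (a+b) \<cdot>\<^sub>m 1\<^sub>m n + M * (poly_mat p M + poly_mat q' M)"
    using pCons M by (simp add: poly_mat_pCons)
  also have "\<dots> = poly_mat (pCons a p) M + poly_mat q M"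
  proof -
    have P: "poly_mat p M \<in> carrier_mat n n" and Q: "poly_mat q' M \<in> carrier_mat n n"
      using M by auto
    have MP: "M * poly_mat p M \<in> carrier_mat n n" and MQ: "M * poly_mat q' M \<in> carrier_mat n n"
      using M P Q by auto
    show ?thesis
      unfolding q poly_mat_pCons[OF M] mult_add_distrib_mat[OF M P Q]
      by (rule eq_matI) (use M P Q MP MQ in \<open>auto simp: algebra_simps carrier_matD[OF P] carrier_matD[OF Q]\<close>)
  qed
  finally show ?case .
qed


lemma poly_mat_dims_aux:
  "dim_row (foldr (\<lambda>c B. c \<cdot>\<^sub>m 1\<^sub>m m + M * B) xs (0\<^sub>m m m)) = (if xs = [] then m else dim_row M) \<and>
   dim_col (foldr (\<lambda>c B. c \<cdot>\<^sub>m 1\<^sub>m m + M * B) xs (0\<^sub>m m m)) = m"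
  by (induct xs) auto

lemma poly_mat_dims[simp]: "dim_row (poly_mat p M) = dim_row M" "dim_col (poly_mat p M) = dim_row M"
  unfolding poly_mat_def using poly_mat_dims_aux[of "dim_row M" M "coeffs p"] by auto

lemma poly_mat_smult:
  assumes M: "M \<in> carrier_mat n n"
  shows "poly_mat (Polynomial.smult c p) M = c \<cdot>\<^sub>m poly_mat p M"
proof (induct p rule: pCons_induct)
  case 0
  then show ?case using M by simp
next
  case (pCons a p)
  have P: "poly_mat p M \<in> carrier_mat n n" using M by auto
  show ?case unfolding smult_pCons poly_mat_pCons[OF M] pCons
    by (rule eq_matI) (use M P in \<open>auto simp: algebra_simps mult_smult_distrib[OF M P] carrier_matD[OF P]\<close>)
qed

lemma poly_mat_uminus:
  assumes M: "M \<in> carrier_mat n n"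
  shows "poly_mat (- p) M = (-1) \<cdot>\<^sub>m poly_mat p M"
  using poly_mat_smult[OF M, of "-1" p] by simp

lemma poly_mat_diff:
  assumes M: "M \<in> carrier_mat n n"
  shows "poly_mat (p - q) M = poly_mat p M + (-1) \<cdot>\<^sub>m poly_mat q M"
  using poly_mat_add[OF M, of p "-q"] poly_mat_uminus[OF M, of q] by simp

lemma poly_mat_pCons0:
  assumes M: "M \<in> carrier_mat n n"
  shows "poly_mat (pCons 0 p) M = M * poly_mat p M"
  using M by (simp add: poly_mat_pCons[OF M] )

lemma poly_mat_comm:
  assumes M: "M \<in> carrier_mat n n"
  shows "M * poly_mat p M = poly_mat p M * M"
proof (induct p rule: pCons_induct)
  case 0
  then show ?case using M by simp
next
  case (pCons a p)
  have P: "poly_mat p M \<in> carrier_mat n n" using M by auto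
  have "M * (a \<cdot>\<^sub>m 1\<^sub>m n + M * poly_mat p M) = a \<cdot>\<^sub>m M + M * (M * poly_mat p M)"
    using M P by (subst mult_add_distrib_mat[OF M]) auto
  also have "\<dots> = a \<cdot>\<^sub>m M + M * (poly_mat p M * M)" using pCons by simp
  also have "\<dots> = (a \<cdot>\<^sub>m 1\<^sub>m n + M * poly_mat p M) * M"
    using M P by (subst add_mult_distrib_mat[of _ n n]) (auto simp: assoc_mult_mat[OF M P M])
  finally show ?case unfolding poly_mat_pCons[OF M] .
qed

lemma poly_mat_mult:
  assumes M: "M \<in> carrier_mat n n"
  shows "poly_mat (p * q) M = poly_mat p M * poly_mat q M"
proof (induct p rule: pCons_induct)
  case 0
  then show ?case using M by simp
next
  case (pCons a p)
  have P: "poly_mat p M \<in> carrier_mat n n" and Q: "poly_mat q M \<in> carrier_mat n n" using M by auto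
  have "poly_mat (pCons a p * q) M = a \<cdot>\<^sub>m poly_mat q M + M * (poly_mat p M * poly_mat q M)"
    using M by (simp add: poly_mat_add[OF M] poly_mat_smult[OF M] poly_mat_pCons0[OF M] pCons)
  also have "\<dots> = (a \<cdot>\<^sub>m 1\<^sub>m n + M * poly_mat p M) * poly_mat q M"
    using M P Q by (subst add_mult_distrib_mat[of _ n n]) (auto simp: assoc_mult_mat[OF M P Q] smult_one_mult_mat[OF Q])
  finally show ?case unfolding poly_mat_pCons[OF M] .
qed

lemma poly_mat_vec:
  assumes M: "M \<in> carrier_mat n n" and v: "v \<in> carrier_vec n" and Mv: "M *\<^sub>v v = z \<cdot>\<^sub>v v"
  shows "poly_mat p M *\<^sub>v v = poly p z \<cdot>\<^sub>v v"
proof (induct p rule: pCons_induct)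
  case 0
  then show ?case using M v by auto
next
  case (pCons a p)
  have P: "poly_mat p M \<in> carrier_mat n n" using M by auto
  have "poly_mat (pCons a p) M *\<^sub>v v = a \<cdot>\<^sub>v v + M *\<^sub>v (poly_mat p M *\<^sub>v v)"
    unfolding poly_mat_pCons[OF M] using M P v
    by (simp add: add_mult_distrib_mat_vec[of _ n n] assoc_mult_mat_vec[of _ n n _ n])
  also have "\<dots> = a \<cdot>\<^sub>v v + poly p z \<cdot>\<^sub>v (z \<cdot>\<^sub>v v)"
    unfolding pCons using mult_mat_vec_smult[OF M v] Mv by simp
  also have "\<dots> = poly (pCons a p) z \<cdot>\<^sub>v v"
    by (rule eq_vecI) (use v in \<open>auto simp: algebra_simps\<close>)
  finally show ?case .
qed


definition pw :: "'a::comm_ring_1 mat \<Rightarrow> nat \<Rightarrow> 'a mat" where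
  "pw M k = poly_mat (monom 1 k) M"

lemma pw_dims[simp]: "dim_row (pw M k) = dim_row M" "dim_col (pw M k) = dim_row M"
  unfolding pw_def by auto

lemma poly_mat_sum_monom_entry:
  assumes M: "M \<in> carrier_mat n n" and i: "i < n" and j: "j < n"
  shows "poly_mat (\<Sum>k<D. monom (c k) k) M $$ (i,j) = (\<Sum>k<D. c k * pw M k $$ (i,j))"
proof (induct D)
  case 0
  then show ?case using M i j by simp
next
  case (Suc D)
  have "poly_mat (\<Sum>k<Suc D. monom (c k) k) M = poly_mat (\<Sum>k<D. monom (c k) k) M + poly_mat (monom (c D) D) M"
    by (simp add: poly_mat_add[OF M])
  moreover have "poly_mat (monom (c D) D) M = c D \<cdot>\<^sub>m pw M D"
    unfolding pw_def using poly_mat_smult[OF M, of "c D" "monom 1 D"] by (simp add: smult_monom)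
  ultimately show ?case using Suc M i j by simp
qed

lemma annihilator_exists:
  fixes M :: "'a::field mat"
  assumes M: "M \<in> carrier_mat n n"
  shows "\<exists>q. q \<noteq> 0 \<and> poly_mat q M = 0\<^sub>m n n"
proof -
  define N where "N = n*n+1"
  define B where "B = mat N N (\<lambda>(r,k). if r < n*n then pw M k $$ (r div n, r mod n) else 0)"
  have Bc: "B \<in> carrier_mat N N" unfolding B_def by auto
  have "B = mat\<^sub>r N N (\<lambda>i. if i = N - 1 then 0\<^sub>v N else row B i)"
  proof (rule eq_matI)
    fix i j assume "i < dim_row (mat\<^sub>r N N (\<lambda>i. if i = N - 1 then 0\<^sub>v N else row B i))"
       "j < dim_col (mat\<^sub>r N N (\<lambda>i. if i = N - 1 then 0\<^sub>v N else row B i))"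
    then have i: "i < N" and j: "j < N" by auto
    show "B $$ (i, j) = mat\<^sub>r N N (\<lambda>i. if i = N - 1 then 0\<^sub>v N else row B i) $$ (i, j)"
      using i j Bc by (simp add: B_def N_def)
  qed (use Bc in auto)
  moreover have "det (mat\<^sub>r N N (\<lambda>i. if i = N - 1 then 0\<^sub>v N else row B i)) = 0"
    by (rule det_row_0) (use Bc in \<open>auto simp: N_def\<close>)
  ultimately have "det B = 0" by simp
  then obtain c where c: "c \<in> carrier_vec N" "c \<noteq> 0\<^sub>v N" "B *\<^sub>v c = 0\<^sub>v N"
    using det_0_iff_vec_prod_zero[OF Bc] by auto
  define q where "q = (\<Sum>k<N. monom (c $ k) k)"
  have coeffq: "coeff q k = (if k < N then c $ k else 0)" for k
    unfolding q_def by (auto simp: coeff_sum coeff_monom)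
  obtain k where k: "k < N" "c $ k \<noteq> 0" using c(1,2) by (metis carrier_vecD eq_vecI index_zero_vec)
  have "q \<noteq> 0" using coeffq[of k] k by auto
  moreover have "poly_mat q M = 0\<^sub>m n n"
  proof (rule eq_matI)
    fix i j assume ij: "i < dim_row (0\<^sub>m n n :: 'a mat)" "j < dim_col (0\<^sub>m n n :: 'a mat)"
    then have i: "i < n" and j: "j < n" by auto
    have r: "i*n+j < n*n"
    proof -
      have "i*n+j < i*n + n" using j by simp
      also have "\<dots> = (i+1)*n" by simp
      also have "\<dots> \<le> n*n" using i mult_le_mono1[of "i+1" n n] by simp
      finally show ?thesis .
    qed
    have dv: "(i*n+j) div n = i" "(i*n+j) mod n = j" using i j by auto
    have "poly_mat q M $$ (i,j) = (\<Sum>k<N. c $ k * pw M k $$ (i,j))"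
      unfolding q_def by (rule poly_mat_sum_monom_entry[OF M i j])
    also have "\<dots> = (B *\<^sub>v c) $ (i*n+j)"
    proof -
      have rN: "i*n+j < N" using r unfolding N_def by simp
      have "(B *\<^sub>v c) $ (i*n+j) = row B (i*n+j) \<bullet> c" using rN Bc by simp
      also have "\<dots> = (\<Sum>k\<in>{0..<N}. B $$ (i*n+j, k) * c $ k)"
        unfolding scalar_prod_def using c(1) rN Bc by (auto intro!: sum.cong)
      also have "\<dots> = (\<Sum>k\<in>{0..<N}. c $ k * pw M k $$ (i,j))"
        using rN r dv by (auto simp: B_def intro!: sum.cong)
      finally show ?thesis by (simp add: lessThan_atLeast0)
    qed
    also have "\<dots> = 0" using c(3) r unfolding N_def by simp
    finally show "poly_mat q M $$ (i,j) = 0\<^sub>m n n $$ (i,j)" using i j by simp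
  qed (use M in auto)
  ultimately show ?thesis by blast
qed


lemma minimal_poly_props:
  fixes M :: "'a::field mat"
  assumes M: "M \<in> carrier_mat n n"
  shows "monic (minimal_poly M) \<and> poly_mat (minimal_poly M) M = 0\<^sub>m n n \<and>
     (\<forall>q. q \<noteq> 0 \<longrightarrow> poly_mat q M = 0\<^sub>m n n \<longrightarrow> degree (minimal_poly M) \<le> degree q)"
proof -
  have dr: "dim_row M = n" using M by auto
  define P where "P = (\<lambda>p. monic p \<and> poly_mat p M = 0\<^sub>m n n \<and>
      (\<forall>q. q \<noteq> 0 \<longrightarrow> poly_mat q M = 0\<^sub>m n n \<longrightarrow> degree p \<le> degree q))"
  define S where "S = {d. \<exists>q. q \<noteq> 0 \<and> poly_mat q M = 0\<^sub>m n n \<and> degree q = d}"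
  have "S \<noteq> {}" using annihilator_exists[OF M] unfolding S_def by auto
  then have "Inf S \<in> S" by (rule Inf_nat_def1)
  then obtain q0 where q0: "q0 \<noteq> 0" "poly_mat q0 M = 0\<^sub>m n n" "degree q0 = Inf S" unfolding S_def by auto
  have minS: "degree q0 \<le> degree q" if "q \<noteq> 0" "poly_mat q M = 0\<^sub>m n n" for q
  proof -
    have "degree q \<in> S" using that unfolding S_def by auto
    then show ?thesis using q0(3) by (simp add: wellorder_Inf_le1)
  qed
  define p0 where "p0 = Polynomial.smult (inverse (lead_coeff q0)) q0"
  have "P p0"
  proof -
    have lc: "lead_coeff q0 \<noteq> 0" using q0(1) by simp
    have c0: "inverse (lead_coeff q0) \<noteq> 0" using lc by simp
    have "monic p0" unfolding p0_def using lc by (simp add: lead_coeff_smult)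
    moreover have "poly_mat p0 M = 0\<^sub>m n n" unfolding p0_def poly_mat_smult[OF M] q0(2) by simp
    moreover have "degree p0 = degree q0" unfolding p0_def using c0 by simp
    ultimately show ?thesis unfolding P_def using minS by simp
  qed
  moreover have "p = p'" if "P p" "P p'" for p p'
  proof (rule ccontr)
    assume ne: "p \<noteq> p'"
    have p0: "p \<noteq> 0" "p' \<noteq> 0" using that unfolding P_def by auto
    have "degree p \<le> degree p'" using that(1) p0(2) that(2) unfolding P_def by blast
    moreover have "degree p' \<le> degree p" using that(2) p0(1) that(1) unfolding P_def by blast
    ultimately have deq: "degree p = degree p'" by simp
    have "degree (p - p') < degree p"
    proof (rule degree_lessI)
      show "p - p' \<noteq> 0 \<or> 0 < degree p" using ne by auto
      show "\<forall>k\<ge>degree p. coeff (p - p') k = 0"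
      proof (intro allI impI)
        fix k assume k: "degree p \<le> k"
        show "coeff (p - p') k = 0"
        proof (cases "k = degree p")
          case True then show ?thesis using that deq unfolding P_def by simp
        next
          case False then have "k > degree p" "k > degree p'" using k deq by auto
          then show ?thesis by (simp add: coeff_eq_0)
        qed
      qed
    qed
    moreover have "poly_mat (p - p') M = 0\<^sub>m n n"
      using that M unfolding P_def by (simp add: poly_mat_diff[OF M])
    moreover have "p - p' \<noteq> 0" using ne by simp
    ultimately show False using that(1) unfolding P_def by (meson not_le)
  qed
  ultimately have "\<exists>!p. P p" by blast
  then have "P (THE p. P p)" by (rule theI')
  then show ?thesis unfolding minimal_poly_def P_def dr .
qed

lemma zero_mat_mult_vec[simp]: "y \<in> carrier_vec n \<Longrightarrow> (0\<^sub>m m n :: 'a::comm_ring_1 mat) *\<^sub>v y = 0\<^sub>v m"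
  by (auto intro!: eq_vecI)

lemma mat_eq_zero_by_vec:
  fixes A :: "'a::comm_ring_1 mat"
  assumes A: "A \<in> carrier_mat n n" and z: "\<And>y. y \<in> carrier_vec n \<Longrightarrow> A *\<^sub>v y = 0\<^sub>v n"
  shows "A = 0\<^sub>m n n"
proof (rule eq_matI)
  fix i j assume "i < dim_row (0\<^sub>m n n :: 'a mat)" "j < dim_col (0\<^sub>m n n :: 'a mat)"
  then have i: "i < n" and j: "j < n" by auto
  have "(A *\<^sub>v unit_vec n j) $ i = 0" using z[of "unit_vec n j"] i by simp
  moreover have "(A *\<^sub>v unit_vec n j) $ i = A $$ (i,j)" using A i j by simp
  ultimately show "A $$ (i,j) = 0\<^sub>m n n $$ (i,j)" using i j by simp
qed (use A in auto)

lemma min_poly_order0: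
  fixes M :: "'a::field mat"
  assumes M: "M \<in> carrier_mat n n" and v: "v \<in> carrier_vec n" "v \<noteq> 0\<^sub>v n" "M *\<^sub>v v = 0\<^sub>v n"
    and ss: "\<And>y. y \<in> carrier_vec n \<Longrightarrow> M *\<^sub>v (M *\<^sub>v y) = 0\<^sub>v n \<Longrightarrow> M *\<^sub>v y = 0\<^sub>v n"
  shows "Polynomial.order 0 (minimal_poly M) = 1"
proof -
  define m where "m = minimal_poly M"
  note mp = minimal_poly_props[OF M, folded m_def]
  have m0: "m \<noteq> 0" using mp by auto
  have Mv: "M *\<^sub>v v = 0 \<cdot>\<^sub>v v" using v by (auto intro!: eq_vecI)
  have "poly_mat m M *\<^sub>v v = poly m 0 \<cdot>\<^sub>v v" by (rule poly_mat_vec[OF M v(1) Mv])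
  moreover have "(0\<^sub>m n n :: 'a mat) *\<^sub>v v = 0\<^sub>v n" using v(1) by (auto intro!: eq_vecI)
  ultimately have "poly m 0 \<cdot>\<^sub>v v = 0\<^sub>v n" using mp v(1) by simp
  then have "poly m 0 = 0"
  proof -
    assume h: "poly m 0 \<cdot>\<^sub>v v = 0\<^sub>v n"
    obtain k where k: "k < n" "v $ k \<noteq> 0" using v(1,2) by (metis carrier_vecD eq_vecI index_zero_vec)
    have "(poly m 0 \<cdot>\<^sub>v v) $ k = 0" using h k by simp
    then show ?thesis using k v(1) by simp
  qed
  then have "Polynomial.order 0 m > 0" using order_gt_0_iff[OF m0] by simp
  then have o1: "Polynomial.order 0 m \<ge> 1" by simp
  have "\<not> Polynomial.order 0 m \<ge> 2"
  proof
    assume "Polynomial.order 0 m \<ge> 2"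
    then have "[:-0, 1:] ^ 2 dvd m" using order_divides by blast
    then obtain q where mq: "m = [:0,1:]^2 * q" by auto
    have q0: "q \<noteq> 0" using m0 mq by auto
    have X: "poly_mat [:0,1:] M = M" using M by (auto simp: poly_mat_pCons[OF M] intro!: eq_matI)
    have Q: "poly_mat q M \<in> carrier_mat n n" using M by auto
    have "poly_mat m M = (M * M) * poly_mat q M"
      unfolding mq power2_eq_square poly_mat_mult[OF M] X ..
    also have "\<dots> = M * (M * poly_mat q M)" by (rule assoc_mult_mat[OF M M Q])
    finally have "M * (M * poly_mat q M) = 0\<^sub>m n n" using mp by simp
    then have "M * poly_mat q M = 0\<^sub>m n n"
    proof -
      assume h: "M * (M * poly_mat q M) = 0\<^sub>m n n"
      show ?thesis
      proof (rule mat_eq_zero_by_vec)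
        show "M * poly_mat q M \<in> carrier_mat n n" using M Q by auto
        fix y :: "'a vec" assume y: "y \<in> carrier_vec n"
        have Qy: "poly_mat q M *\<^sub>v y \<in> carrier_vec n" using Q y by auto
        have "M *\<^sub>v (M *\<^sub>v (poly_mat q M *\<^sub>v y)) = (M * (M * poly_mat q M)) *\<^sub>v y"
          using M Q y by (simp add: assoc_mult_mat_vec[of _ n n _ n])
        also have "\<dots> = 0\<^sub>v n" using h y by simp
        finally have "M *\<^sub>v (poly_mat q M *\<^sub>v y) = 0\<^sub>v n" using ss[OF Qy] by simp
        then show "(M * poly_mat q M) *\<^sub>v y = 0\<^sub>v n"
          using M Q y by (simp add: assoc_mult_mat_vec[of _ n n _ n])
      qed
    qed
    then have "poly_mat ([:0,1:] * q) M = 0\<^sub>m n n" unfolding poly_mat_mult[OF M] X .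
    moreover have "[:0,1:] * q \<noteq> 0" using q0 by simp
    ultimately have "degree m \<le> degree ([:0,1:] * q)" using mp unfolding m_def by blast
    moreover have "degree ([:0,1:] * q) = degree q + 1" using q0 by (simp add: degree_mult_eq)
    moreover have "degree m = degree q + 2" using q0 unfolding mq by (simp add: degree_mult_eq degree_power_eq)
    ultimately show False by simp
  qed
  then show ?thesis using o1 unfolding m_def by simp
qed



lemma ones_vec_carrier[simp]: "ones_vec n \<in> carrier_vec n" and ones_vec_dim[simp]: "dim_vec (ones_vec n) = n"
  and ones_vec_index[simp]: "i < n \<Longrightarrow> ones_vec n $ i = 1"
  unfolding ones_vec_def by auto

lemma ker_dim1_span:
  fixes S :: "'a::field mat"
  assumes S: "S \<in> carrier_mat n n" and kd: "kernel_dim S = 1"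
    and n: "n > 0"
    and S1: "S *\<^sub>v ones_vec n = 0\<^sub>v n"
    and x: "x \<in> carrier_vec n" "S *\<^sub>v x = 0\<^sub>v n"
  shows "\<exists>c. x = c \<cdot>\<^sub>v ones_vec n"
proof (rule ccontr)
  assume nc: "\<nexists>c. x = c \<cdot>\<^sub>v ones_vec n"
  interpret K: kernel n n S by unfold_locales (rule S)
  have dim: "K.dim = 1" using kd by simp
  obtain B where B: "finite B" "K.basis B" using kernel_basis_exists[OF S] by auto
  have fd: "K.Ker.fin_dim" unfolding K.Ker.fin_dim_def using B unfolding K.Ker.basis_def by auto
  define w where "w = x - (x $ 0) \<cdot>\<^sub>v ones_vec n"
  have wc: "w \<in> carrier_vec n" unfolding w_def using x by auto
  have w0: "w $ 0 = 0" unfolding w_def using x n by simp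
  have Sw: "S *\<^sub>v w = 0\<^sub>v n"
  proof -
    have "S *\<^sub>v w = S *\<^sub>v x - S *\<^sub>v ((x $ 0) \<cdot>\<^sub>v ones_vec n)"
      unfolding w_def using S x by (simp add: mult_minus_distrib_mat_vec[of _ n n])
    also have "\<dots> = 0\<^sub>v n" using mult_mat_vec[OF S, of "ones_vec n" "x $ 0"] S1 x by auto
    finally show ?thesis .
  qed
  have wne: "w \<noteq> 0\<^sub>v n"
  proof
    assume "w = 0\<^sub>v n"
    then have "x = (x $ 0) \<cdot>\<^sub>v ones_vec n"
    proof -
      assume w: "w = 0\<^sub>v n"
      show ?thesis
      proof (rule eq_vecI)
        fix i assume "i < dim_vec ((x $ 0) \<cdot>\<^sub>v ones_vec n)"
        then have i: "i < n" by simp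
        have "w $ i = 0" using w i by simp
        then show "x $ i = ((x $ 0) \<cdot>\<^sub>v ones_vec n) $ i" unfolding w_def using i x by simp
      qed (use x in simp)
    qed
    then show False using nc by blast
  qed
  have "\<exists>j<n. w $ j \<noteq> 0"
  proof (rule ccontr)
    assume "\<not> (\<exists>j<n. w $ j \<noteq> 0)"
    then have "w = 0\<^sub>v n" using wc by (intro eq_vecI) auto
    then show False using wne by simp
  qed
  then obtain j where j: "j < n" "w $ j \<noteq> 0" by blast
  have "ones_vec n $ 0 = 1" using n by simp
  then have one_ne_w: "ones_vec n \<noteq> w" using w0 by (metis zero_neq_one)
  have sub: "{ones_vec n, w} \<subseteq> mat_kernel S"
    using S Sw S1 wc by (auto intro!: mat_kernelI)
  have li: "\<not> K.NC.lin_dep {ones_vec n, w}"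
  proof
    assume "K.NC.lin_dep {ones_vec n, w}"
    then obtain A a v where A: "finite A" "A \<subseteq> {ones_vec n, w}" "K.NC.lincomb a A = 0\<^sub>v n" "v \<in> A" "a v \<noteq> 0"
      unfolding K.NC.lin_dep_def by (auto simp: module_vec_simps class_ring_simps)
    have Ac: "A \<subseteq> carrier_vec n" using A(2) wc by auto
    have c0: "(\<Sum>y\<in>A. a y * y $ 0) = 0" and cj: "(\<Sum>y\<in>A. a y * y $ j) = 0"
      using K.NC.lincomb_index[OF n Ac, of a] K.NC.lincomb_index[OF j(1) Ac, of a] A(3) n j by auto
    have "A = {} \<or> A = {ones_vec n} \<or> A = {w} \<or> A = {ones_vec n, w}" using A(2) by blast
    then show False
    proof (elim disjE)
      assume "A = {}" then show False using A by auto
    next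
      assume "A = {ones_vec n}" then show False using A c0 n by auto
    next
      assume "A = {w}" then show False using A cj j by auto
    next
      assume AA: "A = {ones_vec n, w}"
      then have "a (ones_vec n) = 0" using c0 w0 one_ne_w n by auto
      then have "a w = 0" using AA cj j one_ne_w by auto
      then show False using A AA \<open>a (ones_vec n) = 0\<close> by auto
    qed
  qed
  then have "K.lin_indpt {ones_vec n, w}" using K.lindep_same[OF sub] by simp
  then have "card {ones_vec n, w} \<le> K.dim" using K.Ker.li_le_dim(2)[OF fd sub] by simp
  then show False using dim one_ne_w by simp
qed



definition qf :: "nat \<Rightarrow> real mat \<Rightarrow> real vec \<Rightarrow> real vec \<Rightarrow> real" where
  "qf n B x y = (\<Sum>i<n. \<Sum>j<n. x $ i * B $$ (i,j) * y $ j)"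

lemma scalar_qf:
  assumes B: "B \<in> carrier_mat n n" and x: "x \<in> carrier_vec n" and y: "y \<in> carrier_vec n"
  shows "x \<bullet> (B *\<^sub>v y) = qf n B x y"
proof -
  have "x \<bullet> (B *\<^sub>v y) = (\<Sum>i<n. x $ i * (B *\<^sub>v y) $ i)"
    unfolding scalar_prod_def using B by (simp add: lessThan_atLeast0)
  also have "\<dots> = (\<Sum>i<n. x $ i * (\<Sum>j<n. B $$ (i,j) * y $ j))"
    using B y by (intro sum.cong refl) (simp add: scalar_prod_def lessThan_atLeast0)
  also have "\<dots> = qf n B x y" unfolding qf_def
    by (simp add: sum_distrib_left mult.assoc)
  finally show ?thesis .
qed

lemma qf_expand:
  "qf n B (vec n (\<lambda>i. x $ i + t * y $ i)) (vec n (\<lambda>i. x $ i + t * y $ i)) =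
   qf n B x x + t * (qf n B x y + qf n B y x) + t^2 * qf n B y y"
proof -
  have "qf n B (vec n (\<lambda>i. x $ i + t * y $ i)) (vec n (\<lambda>i. x $ i + t * y $ i)) =
     (\<Sum>i<n. \<Sum>j<n. (x $ i + t * y $ i) * B $$ (i,j) * (x $ j + t * y $ j))"
    unfolding qf_def by (intro sum.cong refl) simp
  also have "\<dots> = (\<Sum>i<n. \<Sum>j<n. x $ i * B $$ (i,j) * x $ j + t * (x $ i * B $$ (i,j) * y $ j + y $ i * B $$ (i,j) * x $ j) + t^2 * (y $ i * B $$ (i,j) * y $ j))"
    by (intro sum.cong refl) (simp add: algebra_simps power2_eq_square)
  also have "\<dots> = qf n B x x + t * (qf n B x y + qf n B y x) + t^2 * qf n B y y"
    unfolding qf_def by (simp add: sum.distrib sum_distrib_left distrib_left)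
  finally show ?thesis .
qed

lemma qf_sym:
  assumes "\<And>i j. i < n \<Longrightarrow> j < n \<Longrightarrow> B $$ (i,j) = B $$ (j,i)"
  shows "qf n B x y = qf n B y x"
proof -
  have "qf n B x y = (\<Sum>j<n. \<Sum>i<n. x $ i * B $$ (i,j) * y $ j)" unfolding qf_def by (rule sum.swap)
  also have "\<dots> = qf n B y x" unfolding qf_def using assms
    by (intro sum.cong refl) (simp add: mult.commute mult.left_commute)
  finally show ?thesis .
qed

lemma psd_zero_kernel:
  assumes S: "S \<in> carrier_mat n n"
    and sym: "\<And>i j. i < n \<Longrightarrow> j < n \<Longrightarrow> S $$ (i,j) = S $$ (j,i)"
    and ps: "\<And>z. z \<in> carrier_vec n \<Longrightarrow> qf n S z z \<ge> 0"
    and x: "x \<in> carrier_vec n" and q0: "qf n S x x = 0"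
  shows "S *\<^sub>v x = 0\<^sub>v n"
proof -
  define y where "y = S *\<^sub>v x"
  have yc: "y \<in> carrier_vec n" unfolding y_def using S x by auto
  define a where "a = qf n S y x"
  define b where "b = qf n S y y"
  have a_eq: "a = (\<Sum>i<n. y $ i * y $ i)"
  proof -
    have "a = y \<bullet> y" unfolding a_def y_def using scalar_qf[OF S _ x, of "S *\<^sub>v x"] S x by simp
    also have "\<dots> = (\<Sum>i<n. y $ i * y $ i)" unfolding scalar_prod_def using yc by (simp add: lessThan_atLeast0)
    finally show ?thesis .
  qed
  have a0: "a \<ge> 0" unfolding a_eq by (intro sum_nonneg) simp
  have b0: "b \<ge> 0" unfolding b_def using ps[OF yc] .
  have sxy: "qf n S x y = a" unfolding a_def by (rule qf_sym[OF sym])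
  have key: "0 \<le> 2 * t * a + t^2 * b" for t
  proof -
    have "0 \<le> qf n S (vec n (\<lambda>i. x $ i + t * y $ i)) (vec n (\<lambda>i. x $ i + t * y $ i))"
      by (rule ps) simp
    also have "\<dots> = 2 * t * a + t^2 * b" unfolding qf_expand q0 sxy b_def a_def[symmetric] by simp
    finally show ?thesis .
  qed
  have "a = 0"
  proof (rule ccontr)
    assume "a \<noteq> 0"
    then have ap: "a > 0" using a0 by simp
    define t where "t = - a / (b + 1)"
    have "2 * t * a + t^2 * b < 0"
    proof -
      have bp: "b + 1 > 0" using b0 by simp
      have h: "t * (b+1) = - a" unfolding t_def using bp by simp
      have "(2 * t * a + t^2 * b) * (b+1)^2 = 2*a*(t*(b+1))*(b+1) + b*(t*(b+1))^2"
        by (simp add: algebra_simps power2_eq_square)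
      also have "\<dots> = - 2 * a^2 * (b+1) + a^2 * b" unfolding h by (simp add: power2_eq_square)
      also have "\<dots> < 0"
      proof -
        have "a^2 > 0" using ap by simp
        then have "a^2 * (b + 2) > 0" using b0 by simp
        then show ?thesis by (simp add: algebra_simps)
      qed
      finally show ?thesis using bp by (simp add: mult_less_0_iff)
    qed
    then show False using key[of t] by simp
  qed
  then have "\<forall>i\<in>{..<n}. y $ i * y $ i = 0" unfolding a_eq
    by (subst sum_nonneg_eq_0_iff[symmetric]) auto
  then have "y = 0\<^sub>v n" using yc by (intro eq_vecI) auto
  then show ?thesis unfolding y_def .
qed



lemma lap_carrier: "A \<in> carrier_mat n n \<Longrightarrow> signed_laplacian A \<in> carrier_mat n n"
  unfolding signed_laplacian_def by auto

lemma lap_index: "A \<in> carrier_mat n n \<Longrightarrow> i < n \<Longrightarrow> j < n \<Longrightarrow>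
  signed_laplacian A $$ (i,j) = (if i = j then (\<Sum>k<n. A $$ (i,k)) else 0) - A $$ (i,j)"
  unfolding signed_laplacian_def by auto

lemma mat_vec_ones_entry:
  assumes B: "(B :: real mat) \<in> carrier_mat n n" and i: "i < n"
  shows "(B *\<^sub>v ones_vec n) $ i = (\<Sum>j<n. B $$ (i,j))"
  using B i by (auto simp: scalar_prod_def lessThan_atLeast0 intro!: sum.cong)

lemma lap_rowsum:
  assumes A: "A \<in> carrier_mat n n" and i: "i < n"
  shows "(\<Sum>j<n. signed_laplacian A $$ (i,j)) = 0"
proof -
  have "(\<Sum>j<n. signed_laplacian A $$ (i,j)) = (\<Sum>j<n. (if i = j then (\<Sum>k<n. A $$ (i,k)) else 0) - A $$ (i,j))"
    using A i by (intro sum.cong refl) (simp add: lap_index)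
  also have "\<dots> = 0" using i by (simp add: sum_subtractf sum.delta)
  finally show ?thesis .
qed

lemma lap_ones:
  assumes A: "A \<in> carrier_mat n n"
  shows "signed_laplacian A *\<^sub>v ones_vec n = 0\<^sub>v n"
proof (rule eq_vecI)
  fix i assume "i < dim_vec (0\<^sub>v n :: real vec)"
  then have i: "i < n" by simp
  show "(signed_laplacian A *\<^sub>v ones_vec n) $ i = 0\<^sub>v n $ i"
    using mat_vec_ones_entry[OF lap_carrier[OF A] i] lap_rowsum[OF A i] i by simp
qed (use lap_carrier[OF A] in simp)

lemma neg_mult_vec:
  fixes B :: "'a::comm_ring_1 mat"
  assumes B: "B \<in> carrier_mat n n" and x: "x \<in> carrier_vec n"
  shows "(- B) *\<^sub>v x = - (B *\<^sub>v x)"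
  using B x by (intro eq_vecI) (auto simp: scalar_prod_def sum_negf)

lemma transpose_ones_entry:
  assumes B: "(B :: real mat) \<in> carrier_mat n n" and i: "i < n"
  shows "(transpose_mat B *\<^sub>v ones_vec n) $ i = (\<Sum>j<n. B $$ (j,i))"
  using B i by (auto simp: scalar_prod_def lessThan_atLeast0 intro!: sum.cong)



lemma qf_cong:
  assumes "\<And>i j. i < n \<Longrightarrow> j < n \<Longrightarrow> x $ i * B $$ (i,j) * y $ j = f i j"
  shows "qf n B x y = (\<Sum>i<n. \<Sum>j<n. f i j)"
  unfolding qf_def using assms by (intro sum.cong refl) auto

lemma real_facts:
  fixes A :: "real mat"
  defines "L \<equiv> signed_laplacian A"
  defines "S \<equiv> (1/2) \<cdot>\<^sub>m (L + transpose_mat L)"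
  assumes A: "A \<in> carrier_mat n n"
    and ps: "psd S" and cr: "corank S = 1"
  shows "transpose_mat L *\<^sub>v ones_vec n = 0\<^sub>v n" "n > 0"
    "\<And>x. x \<in> carrier_vec n \<Longrightarrow> qf n (-L) x x \<le> 0"
    "\<And>x. x \<in> carrier_vec n \<Longrightarrow> qf n (-L) x x = 0 \<Longrightarrow> (-L) *\<^sub>v x = 0\<^sub>v n"
    "\<And>x. x \<in> carrier_vec n \<Longrightarrow> (-L) *\<^sub>v ((-L) *\<^sub>v x) = 0\<^sub>v n \<Longrightarrow> (-L) *\<^sub>v x = 0\<^sub>v n"
    "(-L) *\<^sub>v ones_vec n = 0\<^sub>v n"
    "mat_kernel (-L) = mat_kernel S"
proof -
  have Lc: "L \<in> carrier_mat n n" unfolding L_def by (rule lap_carrier[OF A])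
  have Sc: "S \<in> carrier_mat n n" unfolding S_def using Lc by auto
  have Nc: "-L \<in> carrier_mat n n" using Lc by auto
  have Sij: "S $$ (i,j) = (L $$ (i,j) + L $$ (j,i)) / 2" if "i < n" "j < n" for i j
    unfolding S_def using Lc that by simp
  have Ssym: "S $$ (i,j) = S $$ (j,i)" if "i < n" "j < n" for i j
    using Sij[OF that] Sij[OF that(2,1)] by simp
  have psq: "qf n S z z \<ge> 0" if "z \<in> carrier_vec n" for z
  proof -
    have "0 \<le> z \<bullet> (S *\<^sub>v z)" using ps that Sc unfolding psd_def by auto
    then show ?thesis using scalar_qf[OF Sc that that] by simp
  qed
  have qLS: "qf n L x x = qf n S x x" for x
  proof -
    have "qf n S x x = (\<Sum>i<n. \<Sum>j<n. (x $ i * L $$ (i,j) * x $ j)/2 + (x $ i * L $$ (j,i) * x $ j)/2)"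
      by (rule qf_cong) (simp add: Sij algebra_simps add_divide_distrib)
    also have "\<dots> = qf n L x x / 2 + (\<Sum>i<n. \<Sum>j<n. x $ i * L $$ (j,i) * x $ j) / 2"
      unfolding qf_def by (simp add: sum.distrib sum_divide_distrib)
    also have "(\<Sum>i<n. \<Sum>j<n. x $ i * L $$ (j,i) * x $ j) = qf n L x x"
      unfolding qf_def by (subst sum.swap) (simp add: mult.commute mult.left_commute)
    finally show ?thesis by simp
  qed
  have qN: "qf n (-L) x x = - qf n L x x" for x
  proof -
    have "qf n (-L) x x = (\<Sum>i<n. \<Sum>j<n. - (x $ i * L $$ (i,j) * x $ j))"
      by (rule qf_cong) (use Lc in simp)
    then show ?thesis unfolding qf_def by (simp add: sum_negf)
  qed
  have L1: "L *\<^sub>v ones_vec n = 0\<^sub>v n" unfolding L_def by (rule lap_ones[OF A])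
  have qL1: "qf n L (ones_vec n) (ones_vec n) = 0"
    using scalar_qf[OF Lc, of "ones_vec n" "ones_vec n"] L1 by simp
  have S1: "S *\<^sub>v ones_vec n = 0\<^sub>v n"
    by (rule psd_zero_kernel[OF Sc Ssym psq]) (use qL1 qLS in auto)
  show LT1: "transpose_mat L *\<^sub>v ones_vec n = 0\<^sub>v n"
  proof (rule eq_vecI)
    fix i assume "i < dim_vec (0\<^sub>v n :: real vec)"
    then have i: "i < n" by simp
    have "(S *\<^sub>v ones_vec n) $ i = (\<Sum>j<n. S $$ (i,j))" by (rule mat_vec_ones_entry[OF Sc i])
    also have "\<dots> = (\<Sum>j<n. L $$ (i,j)) / 2 + (\<Sum>j<n. L $$ (j,i)) / 2"
      using i by (simp add: Sij sum.distrib sum_divide_distrib add_divide_distrib)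
    also have "(\<Sum>j<n. L $$ (i,j)) = 0" unfolding L_def by (rule lap_rowsum[OF A i])
    finally have "(\<Sum>j<n. L $$ (j,i)) = 0" using S1 i by simp
    then show "(transpose_mat L *\<^sub>v ones_vec n) $ i = 0\<^sub>v n $ i"
      using transpose_ones_entry[OF Lc i] i by simp
  qed (use Lc in simp)
  show n0: "n > 0"
  proof (rule ccontr)
    assume "\<not> n > 0"
    then have "n = 0" by simp
    then have "kernel_dim S = 0" unfolding kernel_dim_code using Sc by simp
    then show False using cr unfolding corank_def by simp
  qed
  have kerS: "\<exists>c. x = c \<cdot>\<^sub>v ones_vec n" if "x \<in> carrier_vec n" "S *\<^sub>v x = 0\<^sub>v n" for x
    by (rule ker_dim1_span[OF Sc _ n0 S1 that]) (use cr in \<open>simp add: corank_def\<close>)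
  show qneg: "qf n (-L) x x \<le> 0" if "x \<in> carrier_vec n" for x
    using psq[OF that] qN qLS by simp
  have N1: "(-L) *\<^sub>v ones_vec n = 0\<^sub>v n" using neg_mult_vec[OF Lc, of "ones_vec n"] L1 by simp
  then show "(-L) *\<^sub>v ones_vec n = 0\<^sub>v n" .
  have kerN: "(-L) *\<^sub>v x = 0\<^sub>v n" if xx: "x \<in> carrier_vec n" "S *\<^sub>v x = 0\<^sub>v n" for x
  proof -
    obtain c where c: "x = c \<cdot>\<^sub>v ones_vec n" using kerS[OF xx] by blast
    have "c \<cdot>\<^sub>v 0\<^sub>v n = (0\<^sub>v n :: real vec)" by (auto intro!: eq_vecI)
    then show ?thesis unfolding c using mult_mat_vec[OF Nc, of "ones_vec n" c] N1 by simp
  qed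
  have NS: "S *\<^sub>v x = 0\<^sub>v n" if "x \<in> carrier_vec n" "(-L) *\<^sub>v x = 0\<^sub>v n" for x
  proof -
    have "qf n (-L) x x = 0" using scalar_qf[OF Nc that(1) that(1)] that by simp
    then have "qf n S x x = 0" using qN qLS by simp
    then show ?thesis using psd_zero_kernel[OF Sc Ssym psq that(1)] by blast
  qed
  show q0: "(-L) *\<^sub>v x = 0\<^sub>v n" if "x \<in> carrier_vec n" "qf n (-L) x x = 0" for x
  proof -
    have "qf n S x x = 0" using that(2) qN qLS by simp
    then have "S *\<^sub>v x = 0\<^sub>v n" using psd_zero_kernel[OF Sc Ssym psq that(1)] by blast
    then show ?thesis by (rule kerN[OF that(1)])
  qed
  show "mat_kernel (-L) = mat_kernel S"
    using Nc Sc NS kerN by (auto simp: mat_kernel_def)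
  show "(-L) *\<^sub>v x = 0\<^sub>v n" if x: "x \<in> carrier_vec n" and h: "(-L) *\<^sub>v ((-L) *\<^sub>v x) = 0\<^sub>v n" for x
  proof -
    define y where "y = (-L) *\<^sub>v x"
    have yc: "y \<in> carrier_vec n" unfolding y_def using Nc x by auto
    obtain c where c: "y = c \<cdot>\<^sub>v ones_vec n" using kerS[OF yc NS[OF yc h[folded y_def]]] by blast
    have "ones_vec n \<bullet> y = qf n (-L) (ones_vec n) x" unfolding y_def by (rule scalar_qf[OF Nc _ x]) simp
    also have "\<dots> = (\<Sum>j<n. x $ j * (\<Sum>i<n. - L $$ (i,j)))"
      unfolding qf_def using Lc by (subst sum.swap) (auto simp: sum_distrib_left mult.commute intro!: sum.cong)
    also have "\<dots> = 0"
    proof (intro sum.neutral ballI)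
      fix j assume "j \<in> {..<n}"
      then have j: "j < n" by simp
      have "(\<Sum>i<n. L $$ (i,j)) = 0"
        using transpose_ones_entry[OF Lc j] LT1 j by simp
      then show "x $ j * (\<Sum>i<n. - L $$ (i,j)) = 0" by (simp add: sum_negf)
    qed
    finally have "ones_vec n \<bullet> y = 0" .
    moreover have "ones_vec n \<bullet> y = c * real n" unfolding c by (simp add: scalar_prod_def)
    ultimately have "c = 0" using n0 by simp
    then show ?thesis using c unfolding y_def by (auto intro!: eq_vecI)
  qed
qed



definition re_v :: "nat \<Rightarrow> complex vec \<Rightarrow> real vec" where "re_v n w = vec n (\<lambda>i. Re (w $ i))"
definition im_v :: "nat \<Rightarrow> complex vec \<Rightarrow> real vec" where "im_v n w = vec n (\<lambda>i. Im (w $ i))"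

lemma re_v_carrier[simp]: "re_v n w \<in> carrier_vec n" and im_v_carrier[simp]: "im_v n w \<in> carrier_vec n"
  unfolding re_v_def im_v_def by auto

lemma re_v_index[simp]: "i < n \<Longrightarrow> re_v n w $ i = Re (w $ i)"
  and im_v_index[simp]: "i < n \<Longrightarrow> im_v n w $ i = Im (w $ i)"
  unfolding re_v_def im_v_def by auto

lemma re_im_mult:
  fixes N :: "real mat"
  assumes N: "N \<in> carrier_mat n n" and w: "w \<in> carrier_vec n"
  shows "re_v n (map_mat complex_of_real N *\<^sub>v w) = N *\<^sub>v re_v n w"
    "im_v n (map_mat complex_of_real N *\<^sub>v w) = N *\<^sub>v im_v n w"
proof -
  have e: "(map_mat complex_of_real N *\<^sub>v w) $ i = (\<Sum>j<n. complex_of_real (N $$ (i,j)) * w $ j)" if "i < n" for i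
    using N w that by (simp add: scalar_prod_def lessThan_atLeast0)
  have r: "(N *\<^sub>v x) $ i = (\<Sum>j<n. N $$ (i,j) * x $ j)" if "i < n" "x \<in> carrier_vec n" for i x
    using N that by (simp add: scalar_prod_def lessThan_atLeast0)
  show "re_v n (map_mat complex_of_real N *\<^sub>v w) = N *\<^sub>v re_v n w"
  proof (rule eq_vecI)
    fix i assume "i < dim_vec (N *\<^sub>v re_v n w)"
    then have i: "i < n" using N by simp
    have "re_v n (map_mat complex_of_real N *\<^sub>v w) $ i = Re (\<Sum>j<n. complex_of_real (N $$ (i,j)) * w $ j)"
      using i e[OF i] by simp
    also have "\<dots> = (\<Sum>j<n. N $$ (i,j) * re_v n w $ j)" by (auto simp: Re_sum intro!: sum.cong)
    also have "\<dots> = (N *\<^sub>v re_v n w) $ i" using r[OF i] by simp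
    finally show "re_v n (map_mat complex_of_real N *\<^sub>v w) $ i = (N *\<^sub>v re_v n w) $ i" .
  qed (use N in simp)
  show "im_v n (map_mat complex_of_real N *\<^sub>v w) = N *\<^sub>v im_v n w"
  proof (rule eq_vecI)
    fix i assume "i < dim_vec (N *\<^sub>v im_v n w)"
    then have i: "i < n" using N by simp
    have "im_v n (map_mat complex_of_real N *\<^sub>v w) $ i = Im (\<Sum>j<n. complex_of_real (N $$ (i,j)) * w $ j)"
      using i e[OF i] by simp
    also have "\<dots> = (\<Sum>j<n. N $$ (i,j) * im_v n w $ j)" by (auto simp: Im_sum intro!: sum.cong)
    also have "\<dots> = (N *\<^sub>v im_v n w) $ i" using r[OF i] by simp
    finally show "im_v n (map_mat complex_of_real N *\<^sub>v w) $ i = (N *\<^sub>v im_v n w) $ i" .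
  qed (use N in simp)
qed

lemma re_im_zero:
  assumes w: "w \<in> carrier_vec n" and "re_v n w = 0\<^sub>v n" "im_v n w = 0\<^sub>v n"
  shows "w = 0\<^sub>v n"
proof (rule eq_vecI)
  fix i assume "i < dim_vec (0\<^sub>v n :: complex vec)"
  then have i: "i < n" by simp
  have "Re (w $ i) = 0" "Im (w $ i) = 0"
    using assms(2,3) i by (metis index_zero_vec(1) re_v_index im_v_index)+
  then show "w $ i = 0\<^sub>v n $ i" using i by (simp add: complex_eqI)
qed (use w in simp)


lemma eigen_analysis:
  fixes N :: "real mat"
  assumes Nc: "N \<in> carrier_mat n n"
    and qneg: "\<And>x. x \<in> carrier_vec n \<Longrightarrow> qf n N x x \<le> 0"
    and q0: "\<And>x. x \<in> carrier_vec n \<Longrightarrow> qf n N x x = 0 \<Longrightarrow> N *\<^sub>v x = 0\<^sub>v n"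
    and v: "v \<in> carrier_vec n" "v \<noteq> 0\<^sub>v n" "map_mat complex_of_real N *\<^sub>v v = z \<cdot>\<^sub>v v"
  shows "Re z \<le> 0" "Re z = 0 \<Longrightarrow> z = 0"
proof -
  define a where "a = re_v n v"
  define b where "b = im_v n v"
  have ac: "a \<in> carrier_vec n" and bc: "b \<in> carrier_vec n" unfolding a_def b_def by auto
  have Na: "(N *\<^sub>v a) $ i = Re z * a $ i - Im z * b $ i" if "i < n" for i
  proof -
    have "N *\<^sub>v a = re_v n (z \<cdot>\<^sub>v v)" unfolding a_def using re_im_mult(1)[OF Nc v(1)] v(3) by simp
    then show ?thesis using that v(1) unfolding a_def b_def by simp
  qed
  have Nb: "(N *\<^sub>v b) $ i = Im z * a $ i + Re z * b $ i" if "i < n" for i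
  proof -
    have "N *\<^sub>v b = im_v n (z \<cdot>\<^sub>v v)" unfolding b_def using re_im_mult(2)[OF Nc v(1)] v(3) by simp
    then show ?thesis using that v(1) unfolding a_def b_def by simp
  qed
  have qa: "qf n N a a = (\<Sum>i<n. a $ i * (Re z * a $ i - Im z * b $ i))"
  proof -
    have "qf n N a a = a \<bullet> (N *\<^sub>v a)" using scalar_qf[OF Nc ac ac] by simp
    also have "\<dots> = (\<Sum>i<n. a $ i * (N *\<^sub>v a) $ i)" unfolding scalar_prod_def using Nc by (simp add: lessThan_atLeast0)
    also have "\<dots> = (\<Sum>i<n. a $ i * (Re z * a $ i - Im z * b $ i))" using Na by (intro sum.cong) auto
    finally show ?thesis .
  qed
  have qb: "qf n N b b = (\<Sum>i<n. b $ i * (Im z * a $ i + Re z * b $ i))"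
  proof -
    have "qf n N b b = b \<bullet> (N *\<^sub>v b)" using scalar_qf[OF Nc bc bc] by simp
    also have "\<dots> = (\<Sum>i<n. b $ i * (N *\<^sub>v b) $ i)" unfolding scalar_prod_def using Nc by (simp add: lessThan_atLeast0)
    also have "\<dots> = (\<Sum>i<n. b $ i * (Im z * a $ i + Re z * b $ i))" using Nb by (intro sum.cong) auto
    finally show ?thesis .
  qed
  define P where "P = (\<Sum>i<n. a $ i * a $ i + b $ i * b $ i)"
  have sumq: "qf n N a a + qf n N b b = Re z * P"
    unfolding qa qb P_def sum.distrib[symmetric] sum_distrib_left
    by (intro sum.cong) (auto simp: algebra_simps)
  have "\<exists>i<n. v $ i \<noteq> 0"
  proof (rule ccontr)
    assume "\<not> (\<exists>i<n. v $ i \<noteq> 0)"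
    then have "v = 0\<^sub>v n" using v(1) by (intro eq_vecI) auto
    then show False using v(2) by simp
  qed
  then obtain i where i: "i < n" "v $ i \<noteq> 0" by blast
  have "a $ i \<noteq> 0 \<or> b $ i \<noteq> 0" using i unfolding a_def b_def by (auto simp: complex_eq_iff)
  then have "a $ i * a $ i + b $ i * b $ i > 0"
  proof (elim disjE)
    assume "a $ i \<noteq> 0"
    then have "a $ i * a $ i > 0" using not_real_square_gt_zero by blast
    moreover have "b $ i * b $ i \<ge> 0" by simp
    ultimately show ?thesis by linarith
  next
    assume "b $ i \<noteq> 0"
    then have "b $ i * b $ i > 0" using not_real_square_gt_zero by blast
    moreover have "a $ i * a $ i \<ge> 0" by simp
    ultimately show ?thesis by linarith
  qed
  then have Pp: "P > 0" unfolding P_def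
    by (intro sum_pos2[of _ i]) (use i in auto)
  have le0: "Re z * P \<le> 0" using sumq qneg[OF ac] qneg[OF bc] by simp
  show "Re z \<le> 0"
  proof (rule ccontr)
    assume "\<not> Re z \<le> 0"
    then have "Re z * P > 0" using Pp by simp
    then show False using le0 by simp
  qed
  assume r0: "Re z = 0"
  have "qf n N a a = 0" "qf n N b b = 0" using sumq r0 qneg[OF ac] qneg[OF bc] by auto
  then have Na0: "N *\<^sub>v a = 0\<^sub>v n" and Nb0: "N *\<^sub>v b = 0\<^sub>v n" using q0 ac bc by auto
  have "Im z * (a $ j * a $ j + b $ j * b $ j) = 0" if "j < n" for j
  proof -
    have "Im z * b $ j = 0" using Na[OF that] Na0 r0 that by simp
    moreover have "Im z * a $ j = 0" using Nb[OF that] Nb0 r0 that by simp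
    ultimately show ?thesis by auto
  qed
  then have "Im z * P = 0" unfolding P_def sum_distrib_left by (intro sum.neutral) auto
  then have "Im z = 0" using Pp by simp
  then show "z = 0" using r0 by (simp add: complex_eq_iff)
qed


lemma complex_part:
  fixes N :: "real mat"
  assumes Nc: "N \<in> carrier_mat n n" and n0: "n > 0"
    and qneg: "\<And>x. x \<in> carrier_vec n \<Longrightarrow> qf n N x x \<le> 0"
    and q0: "\<And>x. x \<in> carrier_vec n \<Longrightarrow> qf n N x x = 0 \<Longrightarrow> N *\<^sub>v x = 0\<^sub>v n"
    and ss: "\<And>x. x \<in> carrier_vec n \<Longrightarrow> N *\<^sub>v (N *\<^sub>v x) = 0\<^sub>v n \<Longrightarrow> N *\<^sub>v x = 0\<^sub>v n"
    and N1: "N *\<^sub>v ones_vec n = 0\<^sub>v n"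
  shows "marginally_stable N"
proof -
  define Mc where "Mc = map_mat complex_of_real N"
  have Mcc: "Mc \<in> carrier_mat n n" unfolding Mc_def using Nc by auto
  have N0: "N *\<^sub>v 0\<^sub>v n = 0\<^sub>v n" using Nc by (intro eq_vecI) (auto simp: scalar_prod_def)
  have re0: "re_v n (0\<^sub>v n) = 0\<^sub>v n" "im_v n (0\<^sub>v n) = 0\<^sub>v n" by (auto intro!: eq_vecI)
  have ev: "\<exists>v. v \<in> carrier_vec n \<and> v \<noteq> 0\<^sub>v n \<and> Mc *\<^sub>v v = z \<cdot>\<^sub>v v" if "eigenvalue Mc z" for z
    using that Mcc unfolding eigenvalue_def eigenvector_def by auto
  have P1: "Re z \<le> 0" if "eigenvalue Mc z" for z
    using ev[OF that] eigen_analysis(1)[OF Nc qneg q0] unfolding Mc_def by blast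
  have Z: "z = 0" if "eigenvalue Mc z" "Re z = 0" for z
    using ev[OF that(1)] eigen_analysis(2)[OF Nc qneg q0 _ _ _ that(2)] unfolding Mc_def by blast
  define v1 where "v1 = vec n (\<lambda>_. 1::complex)"
  have v1c: "v1 \<in> carrier_vec n" unfolding v1_def by simp
  have v1ne: "v1 \<noteq> 0\<^sub>v n"
  proof
    assume "v1 = 0\<^sub>v n"
    then have "v1 $ 0 = 0\<^sub>v n $ 0" by simp
    then show False using n0 unfolding v1_def by simp
  qed
  have Mv1: "Mc *\<^sub>v v1 = 0\<^sub>v n"
  proof (rule re_im_zero)
    show "Mc *\<^sub>v v1 \<in> carrier_vec n" using Mcc v1c by simp
    have "re_v n v1 = ones_vec n" unfolding v1_def by (intro eq_vecI) auto
    then show "re_v n (Mc *\<^sub>v v1) = 0\<^sub>v n" unfolding Mc_def using re_im_mult(1)[OF Nc v1c] N1 by simp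
    have "im_v n v1 = 0\<^sub>v n" unfolding v1_def by (intro eq_vecI) auto
    then show "im_v n (Mc *\<^sub>v v1) = 0\<^sub>v n" unfolding Mc_def using re_im_mult(2)[OF Nc v1c] N0 by simp
  qed
  have ssc: "Mc *\<^sub>v y = 0\<^sub>v n" if y: "y \<in> carrier_vec n" and h: "Mc *\<^sub>v (Mc *\<^sub>v y) = 0\<^sub>v n" for y
  proof (rule re_im_zero)
    have Myc: "Mc *\<^sub>v y \<in> carrier_vec n" using Mcc y by simp
    show "Mc *\<^sub>v y \<in> carrier_vec n" by (rule Myc)
    have "N *\<^sub>v (N *\<^sub>v re_v n y) = re_v n (Mc *\<^sub>v (Mc *\<^sub>v y))"
      unfolding Mc_def using re_im_mult(1)[OF Nc y] re_im_mult(1)[OF Nc Myc[unfolded Mc_def]] by simp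
    also have "\<dots> = 0\<^sub>v n" using h re0 by simp
    finally have "N *\<^sub>v re_v n y = 0\<^sub>v n" using ss by simp
    then show "re_v n (Mc *\<^sub>v y) = 0\<^sub>v n" unfolding Mc_def using re_im_mult(1)[OF Nc y] by simp
    have "N *\<^sub>v (N *\<^sub>v im_v n y) = im_v n (Mc *\<^sub>v (Mc *\<^sub>v y))"
      unfolding Mc_def using re_im_mult(2)[OF Nc y] re_im_mult(2)[OF Nc Myc[unfolded Mc_def]] by simp
    also have "\<dots> = 0\<^sub>v n" using h re0 by simp
    finally have "N *\<^sub>v im_v n y = 0\<^sub>v n" using ss by simp
    then show "im_v n (Mc *\<^sub>v y) = 0\<^sub>v n" unfolding Mc_def using re_im_mult(2)[OF Nc y] by simp
  qed
  have ord: "Polynomial.order 0 (minimal_poly Mc) = 1"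
    by (rule min_poly_order0[OF Mcc v1c v1ne Mv1 ssc])
  show ?thesis unfolding marginally_stable_def Let_def Mc_def[symmetric]
    using P1 Z ord by auto
qed



theorem corollary2:
  fixes A :: "real mat" and n :: nat
  assumes "A \<in> carrier_mat n n"
    and "psd ((1/2) \<cdot>\<^sub>m (signed_laplacian A + transpose_mat (signed_laplacian A)))"
    and "corank ((1/2) \<cdot>\<^sub>m (signed_laplacian A + transpose_mat (signed_laplacian A))) = 1"
  shows "transpose_mat (signed_laplacian A) *\<^sub>v ones_vec n = 0\<^sub>v n \<and>
         marginally_stable (- signed_laplacian A) \<and>
         corank (- signed_laplacian A) = 1"
proof -
  note rf = real_facts[OF assms]
  have Lc: "signed_laplacian A \<in> carrier_mat n n" by (rule lap_carrier[OF assms(1)])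
  have Nc: "- signed_laplacian A \<in> carrier_mat n n" using Lc by simp
  have ms: "marginally_stable (- signed_laplacian A)"
    by (rule complex_part[OF Nc rf(2) rf(3) rf(4) rf(5) rf(6)])
  have "kernel_dim (- signed_laplacian A) =
        kernel_dim ((1/2) \<cdot>\<^sub>m (signed_laplacian A + transpose_mat (signed_laplacian A)))"
    unfolding kernel_dim_def using rf(7) Lc by simp
  then have "corank (- signed_laplacian A) = 1" using assms(3) unfolding corank_def by simp
  then show ?thesis using rf(1) ms by simp
qed


end
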